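(* Let $\mathcal{G}=(\mathcal{V},\mathcal{E})$ be a graph with $V=|\mathcal{V}|$ vertices and $E=|\mathcal{E}|$ edges, and let $\epsilon>0$ and $\gamma\in(0,1)$. Consider the algorithm which, on input $w:\mathcal{E}\to\mathbb{R}^+$, samples independently for each edge $e$ a random variable $X_e\sim\mathrm{Lap}(1/\epsilon)$, sets $w'(e)=w(e)+X_e+(1/\epsilon)\ln(E/\gamma)$, and for each pair of vertices $x,y$ releases a minimum-weight path from $x$ to $y$ in $(\mathcal{G},w')$. With probability at least $1-\gamma$, for every pair of vertices $s,t$ (joined by some path) the released path $P$ satisfies $w(P)-d_w(s,t)\le(2V/\epsilon)\ln(E/\gamma)$.
   Context: $\mathrm{Lap}(b)$ is the Laplace distribution with density $\frac{1}{2b}e^{-|x|/b}$. The weight $w(P)$ of a path is the sum of the weights of its edges, and $d_w(s,t)$ is the minimum weight of a path from $s$ to $t$; $w(P)-d_w(s,t)$ is the approximation error of the path. *)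

theory Defs
  imports "HOL-Probability.Probability"
begin

definition lap_density :: "real \<Rightarrow> real \<Rightarrow> real" where
  "lap_density b x = exp (- \<bar>x\<bar> / b) / (2 * b)"

definition Lap :: "real \<Rightarrow> real measure" where
  "Lap b = density lborel (\<lambda>x. ennreal (lap_density b x))"

definition graph :: "'v set \<Rightarrow> 'v set set \<Rightarrow> bool" where
  "graph Vs Es \<longleftrightarrow> finite Vs \<and> (\<forall>e\<in>Es. \<exists>u v. u \<noteq> v \<and> u \<in> Vs \<and> v \<in> Vs \<and> e = {u, v})"

definition paths :: "'v set \<Rightarrow> 'v set set \<Rightarrow> 'v \<Rightarrow> 'v \<Rightarrow> 'v list set" where
  "paths Vs Es s t = {p. p \<noteq> [] \<and> hd p = s \<and> last p = t \<and> distinct p \<and> set p \<subseteq> Vs \<and>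
      (\<forall>i. i + 1 < length p \<longrightarrow> {p ! i, p ! (i + 1)} \<in> Es)}"

definition path_weight :: "('v set \<Rightarrow> real) \<Rightarrow> 'v list \<Rightarrow> real" where
  "path_weight w p = (\<Sum>i<length p - 1. w {p ! i, p ! (i + 1)})"

definition dist_w :: "'v set \<Rightarrow> 'v set set \<Rightarrow> ('v set \<Rightarrow> real) \<Rightarrow> 'v \<Rightarrow> 'v \<Rightarrow> real" where
  "dist_w Vs Es w s t = Min (path_weight w ` paths Vs Es s t)"

definition is_min_path :: "'v set \<Rightarrow> 'v set set \<Rightarrow> ('v set \<Rightarrow> real) \<Rightarrow> 'v \<Rightarrow> 'v \<Rightarrow> 'v list \<Rightarrow> bool" where
  "is_min_path Vs Es w s t P \<longleftrightarrow> P \<in> paths Vs Es s t \<and>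
     (\<forall>Q\<in>paths Vs Es s t. path_weight w P \<le> path_weight w Q)"

end

theory Submission imports Defs begin

lemma lap_eq_exp:
  assumes b: "b > 0" and x: "x \<noteq> 0"
  shows "lap_density b x = (exponential_density (1/b) x + exponential_density (1/b) (-x)) / 2"
  using b x by (auto simp: lap_density_def exponential_density_def field_simps)

lemma ennreal_half_sum:
  fixes a c :: real assumes "0 \<le> a" "0 \<le> c"
  shows "ennreal (1/2 * a + 1/2 * c) = ennreal (1/2) * ennreal a + ennreal (1/2) * ennreal c"
proof -
  have "ennreal (1/2 * a + 1/2 * c) = ennreal (1/2 * a) + ennreal (1/2 * c)"
    by (rule ennreal_plus) (use assms in auto)
  also have "\<dots> = ennreal (1/2) * ennreal a + ennreal (1/2) * ennreal c"
    using assms by (simp only: ennreal_mult[symmetric])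
  finally show ?thesis .
qed

lemma lap_int_sym:
  assumes b: "b > 0" and S: "S \<in> sets borel" and sym: "\<And>x. x \<in> S \<longleftrightarrow> -x \<in> S"
  shows "(\<integral>\<^sup>+x. ennreal (lap_density b x) * indicator S x \<partial>lborel)
       = (\<integral>\<^sup>+x. ennreal (exponential_density (1/b) x) * indicator S x \<partial>lborel)"
proof -
  let ?g = "exponential_density (1/b)"
  have "(\<integral>\<^sup>+x. ennreal (lap_density b x) * indicator S x \<partial>lborel)
     = (\<integral>\<^sup>+x. ennreal (1/2) * (ennreal (?g x) * indicator S x) + ennreal (1/2) * (ennreal (?g (-x)) * indicator S x) \<partial>lborel)"
  proof (rule nn_integral_cong_AE)
    show "AE x in lborel. ennreal (lap_density b x) * indicator S x =
      ennreal (1/2) * (ennreal (?g x) * indicator S x) + ennreal (1/2) * (ennreal (?g (-x)) * indicator S x)"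
      using AE_lborel_singleton[of 0]
    proof eventually_elim
      case (elim x)
      have "lap_density b x = 1/2 * ?g x + 1/2 * ?g (-x)" using lap_eq_exp[OF b elim] by simp
      have n1: "0 \<le> ?g x" "0 \<le> ?g (-x)" using b by (auto simp: exponential_density_nonneg)
      have "ennreal (lap_density b x) = ennreal (1/2) * ennreal (?g x) + ennreal (1/2) * ennreal (?g (-x))"
        unfolding \<open>lap_density b x = _\<close> using n1 by (rule ennreal_half_sum)
      then show ?case by (simp add: split: split_indicator)
    qed
  qed
  also have "\<dots> = ennreal (1/2) * (\<integral>\<^sup>+x. ennreal (?g x) * indicator S x \<partial>lborel)
       + ennreal (1/2) * (\<integral>\<^sup>+x. ennreal (?g (-x)) * indicator S x \<partial>lborel)"
    using S by (simp add: nn_integral_add nn_integral_cmult)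
  also have "(\<integral>\<^sup>+x. ennreal (?g (-x)) * indicator S x \<partial>lborel) = (\<integral>\<^sup>+x. ennreal (?g x) * indicator S x \<partial>lborel)"
  proof -
    have "(\<integral>\<^sup>+x. ennreal (?g x) * indicator S x \<partial>lborel) = (\<integral>\<^sup>+x. ennreal (?g (0 + -1 * x)) * indicator S (0 + -1 * x) \<partial>lborel)"
      using nn_integral_real_affine[of "\<lambda>x. ennreal (?g x) * indicator S x" "-1" 0] S by simp
    also have "\<dots> = (\<integral>\<^sup>+x. ennreal (?g (-x)) * indicator S x \<partial>lborel)"
      using sym by (simp add: indicator_def)
    finally show ?thesis by simp
  qed
  finally have "(\<integral>\<^sup>+x. ennreal (lap_density b x) * indicator S x \<partial>lborel) =
     ennreal (1/2) * (\<integral>\<^sup>+x. ennreal (?g x) * indicator S x \<partial>lborel) + ennreal (1/2) * (\<integral>\<^sup>+x. ennreal (?g x) * indicator S x \<partial>lborel)" .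
  also have "\<dots> = (ennreal (1/2) + ennreal (1/2)) * (\<integral>\<^sup>+x. ennreal (?g x) * indicator S x \<partial>lborel)"
    by (simp add: distrib_right)
  also have "ennreal (1/2) + ennreal (1/2) = 1"
  proof -
    have "ennreal (1/2) + ennreal (1/2) = ennreal (1/2 + 1/2)" by (rule ennreal_plus[symmetric]) auto
    then show ?thesis by simp
  qed
  finally show ?thesis by simp
qed

lemma space_Lap[simp]: "space (Lap b) = UNIV" and sets_Lap[simp]: "sets (Lap b) = sets borel"
  by (auto simp: Lap_def)

lemma prob_space_Lap: assumes b: "b > 0" shows "prob_space (Lap b)"
proof (rule prob_spaceI)
  interpret E: prob_space "density lborel (exponential_density (1/b))"
    using b by (intro prob_space_exponential_density) auto
  have "emeasure (Lap b) (space (Lap b)) = (\<integral>\<^sup>+x. ennreal (lap_density b x) * indicator UNIV x \<partial>lborel)"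
    by (simp add: Lap_def emeasure_density lap_density_def)
  also have "\<dots> = (\<integral>\<^sup>+x. ennreal (exponential_density (1/b) x) * indicator UNIV x \<partial>lborel)"
    by (rule lap_int_sym) (use b in auto)
  also have "\<dots> = emeasure (density lborel (exponential_density (1/b))) (space (density lborel (exponential_density (1/b))))"
    by (simp add: emeasure_density)
  also have "\<dots> = 1" by (rule E.emeasure_space_1)
  finally show "emeasure (Lap b) (space (Lap b)) = 1" .
qed

lemma Lap_tail:
  assumes b: "b > 0" and a: "a \<ge> 0"
  shows "measure (Lap b) {x. a < \<bar>x\<bar>} = exp (- a / b)"
proof -
  let ?g = "exponential_density (1/b)"
  interpret E: prob_space "density lborel ?g"
    using b by (intro prob_space_exponential_density) auto
  have "emeasure (Lap b) {x. a < \<bar>x\<bar>} = (\<integral>\<^sup>+x. ennreal (lap_density b x) * indicator {x. a < \<bar>x\<bar>} x \<partial>lborel)"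
    by (simp add: Lap_def emeasure_density lap_density_def)
  also have "\<dots> = (\<integral>\<^sup>+x. ennreal (?g x) * indicator {x. a < \<bar>x\<bar>} x \<partial>lborel)"
    by (rule lap_int_sym) (use b in auto)
  also have "\<dots> = (\<integral>\<^sup>+x. ennreal (?g x) * indicator {a<..} x \<partial>lborel)"
    by (rule nn_integral_cong) (use a in \<open>auto simp: exponential_density_def split: split_indicator\<close>)
  also have "\<dots> = emeasure (density lborel ?g) {a<..}"
    by (simp add: emeasure_density)
  finally have eq: "emeasure (Lap b) {x. a < \<bar>x\<bar>} = emeasure (density lborel ?g) {a<..}" .
  have "measure (density lborel ?g) {a<..} = 1 - measure (density lborel ?g) {..a}"
  proof -
    have "{a<..} = space (density lborel ?g) - {..a}" by auto
    then show ?thesis using E.prob_compl[of "{..a}"] by simp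
  qed
  also have "measure (density lborel ?g) {..a} = erlang_CDF 0 (1/b) a"
    using emeasure_erlang_density[of "1/b" 0 a] b
    by (simp add: E.emeasure_eq_measure erlang_CDF_nonneg)
  finally have "measure (density lborel ?g) {a<..} = exp (- a / b)"
    using a by (simp add: erlang_CDF_0)
  moreover have "measure (Lap b) {x. a < \<bar>x\<bar>} = measure (density lborel ?g) {a<..}"
    unfolding measure_def eq ..
  ultimately show ?thesis by simp
qed


lemma paths_length: assumes "graph Vs Es" "p \<in> paths Vs Es s t" shows "length p \<le> card Vs"
proof -
  have "length p = card (set p)" using assms(2) by (simp add: paths_def distinct_card)
  also have "\<dots> \<le> card Vs" using assms by (intro card_mono) (auto simp: graph_def paths_def)
  finally show ?thesis .
qed

lemma finite_paths: assumes "graph Vs Es" shows "finite (paths Vs Es s t)"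
proof -
  have "paths Vs Es s t \<subseteq> {p. set p \<subseteq> Vs \<and> length p \<le> card Vs}"
    using paths_length[OF assms] by (auto simp: paths_def)
  moreover have "finite {p. set p \<subseteq> Vs \<and> length p \<le> card Vs}"
    using assms by (intro finite_lists_length_le) (auto simp: graph_def)
  ultimately show ?thesis by (rule finite_subset)
qed

lemma path_edge: assumes "p \<in> paths Vs Es s t" "i < length p - 1" shows "{p ! i, p ! (i + 1)} \<in> Es"
  using assms by (auto simp: paths_def)

lemma pw_shift: "path_weight (\<lambda>e. w e + X e + c) p = path_weight w p + (\<Sum>i<length p - 1. X {p ! i, p ! (i + 1)} + c)"
  by (simp add: path_weight_def sum.distrib add.assoc)

lemma det_bound:
  assumes G: "graph Vs Es" and ne: "paths Vs Es s t \<noteq> {}"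
    and mp: "is_min_path Vs Es (\<lambda>e. w e + X e + c) s t P"
    and c: "c \<ge> 0" and X: "\<forall>e\<in>Es. \<bar>X e\<bar> \<le> c"
  shows "path_weight w P - dist_w Vs Es w s t \<le> 2 * real (card Vs) * c"
proof -
  let ?w' = "\<lambda>e. w e + X e + c"
  have fin: "finite (path_weight w ` paths Vs Es s t)" using finite_paths[OF G] by simp
  have "dist_w Vs Es w s t \<in> path_weight w ` paths Vs Es s t"
    unfolding dist_w_def using fin ne by (intro Min_in) auto
  then obtain Q where Q: "Q \<in> paths Vs Es s t" and dQ: "dist_w Vs Es w s t = path_weight w Q" by auto
  have P: "P \<in> paths Vs Es s t" and le: "path_weight ?w' P \<le> path_weight ?w' Q"
    using mp Q by (auto simp: is_min_path_def)
  have "0 \<le> (\<Sum>i<length P - 1. X {P ! i, P ! (i + 1)} + c)"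
  proof (rule sum_nonneg)
    fix i assume "i \<in> {..<length P - 1}"
    then have "{P ! i, P ! (i + 1)} \<in> Es" using path_edge[OF P] by auto
    then show "0 \<le> X {P ! i, P ! (i + 1)} + c" using X by force
  qed
  then have 1: "path_weight w P \<le> path_weight ?w' P" by (simp add: pw_shift)
  have "(\<Sum>i<length Q - 1. X {Q ! i, Q ! (i + 1)} + c) \<le> (\<Sum>i<length Q - 1. 2 * c)"
  proof (rule sum_mono)
    fix i assume "i \<in> {..<length Q - 1}"
    then have "{Q ! i, Q ! (i + 1)} \<in> Es" using path_edge[OF Q] by auto
    then show "X {Q ! i, Q ! (i + 1)} + c \<le> 2 * c" using X by force
  qed
  also have "\<dots> = real (length Q - 1) * (2 * c)" by simp
  also have "\<dots> \<le> real (card Vs) * (2 * c)"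
    using paths_length[OF G Q] c by (intro mult_right_mono) auto
  finally have 2: "path_weight ?w' Q \<le> path_weight w Q + real (card Vs) * (2 * c)" by (simp add: pw_shift)
  show ?thesis using 1 2 le dQ by simp
qed


theorem corollary5p6:
  fixes Vs :: "'v set" and Es :: "'v set set" and w :: "'v set \<Rightarrow> real"
    and \<epsilon> \<gamma> :: real
  assumes "graph Vs Es"
    and "\<epsilon> > 0" and "0 < \<gamma>" and "\<gamma> < 1"
    and "\<forall>e\<in>Es. w e > 0"
  shows "prob_space.prob (PiM Es (\<lambda>_. Lap (1 / \<epsilon>)))
     {X \<in> space (PiM Es (\<lambda>_. Lap (1 / \<epsilon>))).
        \<forall>s\<in>Vs. \<forall>t\<in>Vs. \<forall>P. paths Vs Es s t \<noteq> {} \<longrightarrow>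
          is_min_path Vs Es (\<lambda>e. w e + X e + (1 / \<epsilon>) * ln (real (card Es) / \<gamma>)) s t P \<longrightarrow>
          path_weight w P - dist_w Vs Es w s t
            \<le> (2 * real (card Vs) / \<epsilon>) * ln (real (card Es) / \<gamma>)}
     \<ge> 1 - \<gamma>"
proof -
  note G = assms(1) and eps = assms(2) and gam = assms(3,4)
  define b where "b = 1 / \<epsilon>"
  define c where "c = (1 / \<epsilon>) * ln (real (card Es) / \<gamma>)"
  define M where "M = PiM Es (\<lambda>_. Lap b)"
  have b: "b > 0" using eps by (simp add: b_def)
  have finE: "finite Es"
  proof -
    have "Es \<subseteq> Pow Vs" using G by (auto simp: graph_def)
    then show ?thesis using G by (auto simp: graph_def intro: finite_subset)
  qed
  have c0: "c \<ge> 0"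
  proof (cases "card Es = 0")
    case True then show ?thesis by (simp add: c_def)
  next
    case False
    then have "real (card Es) / \<gamma> \<ge> 1" using gam by (simp add: field_simps)
    then show ?thesis using eps by (simp add: c_def)
  qed
  interpret L: prob_space "Lap b" by (rule prob_space_Lap[OF b])
  interpret P: product_prob_space "\<lambda>_. Lap b" Es
    by (simp add: product_prob_space_def product_sigma_finite_def product_prob_space_axioms_def
        L.sigma_finite_measure_axioms L.prob_space_axioms)
  interpret PM: prob_space M unfolding M_def by (rule prob_space_PiM) (rule prob_space_Lap[OF b])
  have comp: "(\<lambda>X. X e) \<in> borel_measurable M" if "e \<in> Es" for e
  proof -
    have "(\<lambda>X. X e) \<in> measurable M (Lap b)"
      unfolding M_def using measurable_component_singleton[OF that, of "\<lambda>_. Lap b"] .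
    moreover have "measurable M (Lap b) = measurable M borel"
      by (rule measurable_cong_sets) auto
    ultimately show ?thesis by simp
  qed
  have pwm: "(\<lambda>X. path_weight (\<lambda>e. w e + X e + c) p) \<in> borel_measurable M"
    if "p \<in> paths Vs Es s t" for p s t
    unfolding path_weight_def
  proof (rule borel_measurable_sum)
    fix i assume "i \<in> {..<length p - 1}"
    then have "{p ! i, p ! (i + 1)} \<in> Es" using path_edge[OF that] by auto
    from comp[OF this] show "(\<lambda>X. w {p ! i, p ! (i + 1)} + X {p ! i, p ! (i + 1)} + c) \<in> borel_measurable M"
      by measurable
  qed
  define Bd where "Bd s t P \<longleftrightarrow> path_weight w P - dist_w Vs Es w s t \<le> 2 * real (card Vs) * c" for s t P
  define Ev where "Ev = {X \<in> space M. \<forall>s\<in>Vs. \<forall>t\<in>Vs. \<forall>P\<in>paths Vs Es s t.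
      (\<forall>Q\<in>paths Vs Es s t. path_weight (\<lambda>e. w e + X e + c) P \<le> path_weight (\<lambda>e. w e + X e + c) Q) \<longrightarrow> Bd s t P}"
  have Ev_eq: "{X \<in> space (PiM Es (\<lambda>_. Lap (1 / \<epsilon>))).
        \<forall>s\<in>Vs. \<forall>t\<in>Vs. \<forall>P. paths Vs Es s t \<noteq> {} \<longrightarrow>
          is_min_path Vs Es (\<lambda>e. w e + X e + (1 / \<epsilon>) * ln (real (card Es) / \<gamma>)) s t P \<longrightarrow>
          path_weight w P - dist_w Vs Es w s t
            \<le> (2 * real (card Vs) / \<epsilon>) * ln (real (card Es) / \<gamma>)} = Ev"
    unfolding Ev_def Bd_def M_def b_def c_def is_min_path_def
    by (auto simp: field_simps) (blast+)?
  have Ev_sets: "Ev \<in> sets M"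
    unfolding Ev_def
  proof (intro sets.sets_Collect_finite_All sets.sets_Collect_imp sets.sets_Collect_const)
    fix s t P Q assume "s \<in> Vs" "t \<in> Vs" "P \<in> paths Vs Es s t" "Q \<in> paths Vs Es s t"
    show "{X \<in> space M. path_weight (\<lambda>e. w e + X e + c) P \<le> path_weight (\<lambda>e. w e + X e + c) Q} \<in> sets M"
      using pwm[OF \<open>P \<in> _\<close>] pwm[OF \<open>Q \<in> _\<close>] by measurable
  qed (use G finite_paths[OF G] in \<open>auto simp: graph_def\<close>)
  define U where "U = (\<Union>e\<in>Es. {X \<in> space M. c < \<bar>X e\<bar>})"
  have Ue: "{X \<in> space M. c < \<bar>X e\<bar>} \<in> sets M" if "e \<in> Es" for e
    using comp[OF that] by measurable
  have Ums: "PM.prob {X \<in> space M. c < \<bar>X e\<bar>} = exp (- c / b)" if "e \<in> Es" for e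
  proof -
    have "{X \<in> space M. c < \<bar>X e\<bar>} = {X \<in> space M. X e \<in> {x. c < \<bar>x\<bar>}}" by auto
    then have "emeasure M {X \<in> space M. c < \<bar>X e\<bar>} = emeasure (Lap b) {x. c < \<bar>x\<bar>}"
      unfolding M_def using P.emeasure_PiM_Collect_single[OF that, of "{x. c < \<bar>x\<bar>}"] by simp
    then show ?thesis
      using Lap_tail[OF b c0] L.emeasure_eq_measure
      by (simp add: PM.emeasure_eq_measure)
  qed
  have "PM.prob U \<le> (\<Sum>e\<in>Es. PM.prob {X \<in> space M. c < \<bar>X e\<bar>})"
    unfolding U_def using finE Ue by (intro PM.finite_measure_subadditive_finite) auto
  also have "\<dots> = real (card Es) * exp (- c / b)" using Ums by simp
  also have "\<dots> \<le> \<gamma>"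
  proof (cases "card Es = 0")
    case True then show ?thesis using gam by simp
  next
    case False
    then have pos: "real (card Es) / \<gamma> > 0" using gam by simp
    have "- c / b = - ln (real (card Es) / \<gamma>)" using eps by (simp add: c_def b_def)
    then have "exp (- c / b) = \<gamma> / real (card Es)" using pos by (simp add: exp_minus)
    then show ?thesis using False by simp
  qed
  finally have PU: "PM.prob U \<le> \<gamma>" .
  have Usets: "U \<in> sets M" unfolding U_def using finE Ue by auto
  have sub: "space M - U \<subseteq> Ev"
  proof
    fix X assume X: "X \<in> space M - U"
    then have Xb: "\<forall>e\<in>Es. \<bar>X e\<bar> \<le> c" by (auto simp: U_def not_less)
    show "X \<in> Ev" unfolding Ev_def Bd_def
    proof (intro CollectI conjI ballI impI)
      fix s t P assume "s \<in> Vs" "t \<in> Vs" and P: "P \<in> paths Vs Es s t"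
        and m: "\<forall>Q\<in>paths Vs Es s t. path_weight (\<lambda>e. w e + X e + c) P \<le> path_weight (\<lambda>e. w e + X e + c) Q"
      show "path_weight w P - dist_w Vs Es w s t \<le> 2 * real (card Vs) * c"
        by (rule det_bound[OF G _ _ c0 Xb]) (use P m in \<open>auto simp: is_min_path_def\<close>)
    qed (use X in auto)
  qed
  have "1 - \<gamma> \<le> 1 - PM.prob U" using PU by simp
  also have "\<dots> = PM.prob (space M - U)" using PM.prob_compl[OF Usets] by simp
  also have "\<dots> \<le> PM.prob Ev" using sub Ev_sets by (intro PM.finite_measure_mono) auto
  finally show ?thesis using Ev_eq unfolding M_def b_def by simp
qed

end
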